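(* Let $G$, $k\ge 3$, the choice strings $c_{i,j}$, the template string $t$, $L$ and $d$ be as in the binary construction in the context, and let $s\in\{0,1\}^L$ be a solution, i.e. $t$ and every choice string $c_{i,j}$ ($1\le i<j\le k$) have a substring of length $L$ (a match) at Hamming distance at most $d$ from $s$. Then $s$ and all its matches in $t$ and in the choice strings start with $\mathrm{front\_tag}$.
   Context: Let $G=(V,E)$ be an undirected simple graph with $V=\{v_1,\dots,v_n\}$ and edge set $E=\{e_1,\dots,e_m\}$, and let $k\ge 3$ be an integer; put $N=\binom{k}{2}$ and $b=nk-2k+2$. All strings are over $\{0,1\}$. For $1\le p\le n$ let $\mathrm{number}(p)=0^{p-1}10^{n-p}$. Let $\mathrm{front\_tag}=(1^{3nk}0)^{nk}$ (length $(3nk+1)nk$). Order the pairs $(i,j)$, $1\le i<j\le k$, lexicographically and let $i'$ be the position of $(i,j)$ in this order. For an edge $e$ joining $v_r,v_s$ with $r<s$ let $\mathrm{encode}(i,j,e)=(0^n)^{i-1}\,\mathrm{number}(r)\,(0^n)^{j-i-1}\,\mathrm{number}(s)\,(0^n)^{k-j}$, $\mathrm{back\_tag}(i')=0^{(i'-1)b}1^{b}0^{(N-i')b}$, and $\mathrm{block}(i,j,e)=\mathrm{front\_tag}\,\mathrm{encode}(i,j,e)\,\mathrm{back\_tag}(i')$. The choice string is $c_{i,j}=\mathrm{block}(i,j,e_1)\cdots\mathrm{block}(i,j,e_m)$. The template string is $t=\mathrm{front\_tag}\,1^{nk}\,0^{Nb}$. Set $L=(3nk+1)nk+nk+Nb$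 and $d=nk-k$. *)

theory Defs
  imports Main "HOL-Library.Sublist"
begin

text \<open>Binary strings are bool lists (True = 1, False = 0).
  The graph has vertices 1..n; its edges are given by a duplicate-free list E of
  pairs (r,s) with 1 \<le> r < s \<le> n, giving the enumeration e_1,...,e_m.\<close>

definition zeros :: "nat \<Rightarrow> bool list" where
  "zeros l = replicate l False"

definition ones :: "nat \<Rightarrow> bool list" where
  "ones l = replicate l True"

definition number :: "nat \<Rightarrow> nat \<Rightarrow> bool list" where
  "number n p = zeros (p - 1) @ [True] @ zeros (n - p)"

definition front_tag :: "nat \<Rightarrow> nat \<Rightarrow> bool list" where
  "front_tag n k = concat (replicate (n * k) (ones (3 * n * k) @ [False]))"

definition Nval :: "nat \<Rightarrow> nat" where
  "Nval k = k choose 2"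

definition bval :: "nat \<Rightarrow> nat \<Rightarrow> nat" where
  "bval n k = n * k + 2 - 2 * k"

text \<open>Position of the pair (i,j) in the lexicographic order of pairs (a,b), 1 \<le> a < b \<le> k.\<close>
definition pair_index :: "nat \<Rightarrow> nat \<Rightarrow> nat \<Rightarrow> nat" where
  "pair_index k i j = card {(a, b). 1 \<le> a \<and> a < b \<and> b \<le> k \<and> (a < i \<or> (a = i \<and> b \<le> j))}"

definition encode :: "nat \<Rightarrow> nat \<Rightarrow> nat \<Rightarrow> nat \<Rightarrow> nat \<times> nat \<Rightarrow> bool list" where
  "encode n k i j e = (case e of (r, s) \<Rightarrow>
     concat (replicate (i - 1) (zeros n)) @ number n r @
     concat (replicate (j - i - 1) (zeros n)) @ number n s @
     concat (replicate (k - j) (zeros n)))"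

definition back_tag :: "nat \<Rightarrow> nat \<Rightarrow> nat \<Rightarrow> bool list" where
  "back_tag n k i' = zeros ((i' - 1) * bval n k) @ ones (bval n k) @ zeros ((Nval k - i') * bval n k)"

definition block :: "nat \<Rightarrow> nat \<Rightarrow> nat \<Rightarrow> nat \<Rightarrow> nat \<times> nat \<Rightarrow> bool list" where
  "block n k i j e = front_tag n k @ encode n k i j e @ back_tag n k (pair_index k i j)"

definition choice :: "nat \<Rightarrow> nat \<Rightarrow> (nat \<times> nat) list \<Rightarrow> nat \<Rightarrow> nat \<Rightarrow> bool list" where
  "choice n k E i j = concat (map (block n k i j) E)"

definition template :: "nat \<Rightarrow> nat \<Rightarrow> bool list" where
  "template n k = front_tag n k @ ones (n * k) @ zeros (Nval k * bval n k)"

definition Lval :: "nat \<Rightarrow> nat \<Rightarrow> nat" where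
  "Lval n k = (3 * n * k + 1) * n * k + n * k + Nval k * bval n k"

definition dval :: "nat \<Rightarrow> nat \<Rightarrow> nat" where
  "dval n k = n * k - k"

definition hamming :: "bool list \<Rightarrow> bool list \<Rightarrow> nat" where
  "hamming x y = card {p. p < length x \<and> x ! p \<noteq> y ! p}"

definition substrs :: "nat \<Rightarrow> bool list \<Rightarrow> bool list set" where
  "substrs l c = {take l (drop p c) | p. p + l \<le> length c}"

end

theory Submission
  imports Defs
begin


definition ftf :: "nat \<Rightarrow> nat \<Rightarrow> bool" where
  "ftf M x = (x mod M \<noteq> M - 1)"

lemma res_lower:
  assumes "M > 0" "c < M"
  shows "l div M \<le> card {x. x < l \<and> (x + d) mod M = c}"
proof -
  define r0 where "r0 = (c + M - d mod M) mod M"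
  have r0M: "r0 < M" using assms unfolding r0_def by simp
  have sub: "(\<lambda>i. i * M + r0) ` {..< l div M} \<subseteq> {x. x < l \<and> (x + d) mod M = c}"
  proof
    fix y assume "y \<in> (\<lambda>i. i * M + r0) ` {..< l div M}"
    then obtain i where i: "i < l div M" "y = i * M + r0" by auto
    have "y < (i+1) * M" using i r0M by simp
    also have "(i+1)*M \<le> (l div M) * M" using i by (intro mult_right_mono) auto
    also have "\<dots> \<le> l" by simp
    finally have y1: "y < l" .
    have "y + d = (r0 + d) + i * M" using i by simp
    then have "(y + d) mod M = (r0 + d) mod M" by (metis mod_mult_self1)
    also have "\<dots> = ((c + M - d mod M) + d) mod M" unfolding r0_def by (simp add: mod_add_left_eq)
    also have "\<dots> = ((c + M - d mod M) + d mod M) mod M" by (simp add: mod_add_right_eq)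
    also have "\<dots> = (c + M) mod M" using assms
    proof -
      have "d mod M < M" using assms by simp
      then show ?thesis by simp
    qed
    also have "\<dots> = c" using assms by simp
    finally show "y \<in> {x. x < l \<and> (x + d) mod M = c}" using y1 by simp
  qed
  have inj: "inj_on (\<lambda>i. i * M + r0) {..< l div M}" using assms by (auto simp: inj_on_def)
  show ?thesis
  proof -
    have "card ((\<lambda>i. i * M + r0) ` {..< l div M}) = l div M"
      using inj by (simp add: card_image)
    moreover have "card ((\<lambda>i. i * M + r0) ` {..< l div M}) \<le> card {x. x < l \<and> (x + d) mod M = c}"
      using sub by (intro card_mono) auto
    ultimately show ?thesis by simp
  qed
qed

lemma res_upper:
  assumes "M > 0"
  shows "card {x. a \<le> x \<and> x < a + l \<and> x mod M = c} \<le> l div M + 1"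
proof -
  let ?S = "{x. a \<le> x \<and> x < a + l \<and> x mod M = c}"
  have "inj_on (\<lambda>x. (x - a) div M) ?S"
  proof (rule inj_onI)
    fix x y assume x: "x \<in> ?S" and y: "y \<in> ?S" and e: "(x - a) div M = (y - a) div M"
    have xy: "x mod M = y mod M" using x y by simp
    have "x - a = y - a"
    proof (rule ccontr)
      assume ne: "x - a \<noteq> y - a"
      { fix u v assume uv: "u \<in> ?S" "v \<in> ?S" "u < v" "(u - a) div M = (v - a) div M"
        have "u mod M = v mod M" using uv by simp
        then have "M dvd v - u" using uv(3) mod_eq_dvd_iff_nat[of u v M] by simp
        moreover have "v - u = (v - a) - (u - a)" using uv by auto
        moreover have "(v - a) - (u - a) < M"
        proof -
          have h1: "v - a < ((v-a) div M) * M + M" using assms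
            using mod_less_divisor[OF assms, of "v-a"] div_mult_mod_eq[of "v-a" M] by linarith
          have h2: "((u-a) div M) * M \<le> u - a" by (rule div_times_less_eq_dividend)
          have h3: "((v-a) div M) * M \<le> u - a" using h2 uv(4) by simp
          have gen: "\<And>X Y Q. X < Q + M \<Longrightarrow> Q \<le> Y \<Longrightarrow> X - Y < M" using assms by arith
          show ?thesis using gen[OF h1 h3] .
        qed
        ultimately have "M dvd v - u" "v - u < M" by auto
        moreover have "0 < v - u" using uv(3) by simp
        ultimately have False using dvd_imp_le not_le by blast }
      note * = this
      show False
      proof (cases "x < y")
        case True then show False using *[OF x y _ e] by simp
      next
        case False then have "y < x" using ne by (cases "x = y") auto
        then show False using *[OF y x _ e[symmetric]] by simp
      qed
    qed
    then show "x = y" using x y by (simp add: eq_diff_iff)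
  qed
  moreover have "(\<lambda>x. (x - a) div M) ` ?S \<subseteq> {..l div M}"
    by (auto intro: div_le_mono)
  ultimately have "card ?S \<le> card {..l div M}"
    by (meson card_inj_on_le finite_atMost)
  then show ?thesis by simp
qed

lemma shift_lower:
  assumes "M > 0" "d mod M \<noteq> 0"
  shows "2 * (l div M) \<le> card {x. x < l \<and> ftf M (x + d) \<noteq> ftf M x}"
proof -
  let ?S1 = "{x. x < l \<and> (x + 0) mod M = M - 1}"
  let ?S2 = "{x. x < l \<and> (x + d) mod M = M - 1}"
  have c1: "l div M \<le> card ?S1" using res_lower[of M "M-1" l 0] assms by simp
  have c2: "l div M \<le> card ?S2" using res_lower[of M "M-1" l d] assms by simp
  have disj: "?S1 \<inter> ?S2 = {}"
  proof (rule ccontr)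
    assume "?S1 \<inter> ?S2 \<noteq> {}"
    then obtain x where "x mod M = M - 1" "(x + d) mod M = M - 1" by auto
    then have "x mod M = (x + d) mod M" by simp
    then have "M dvd (x + d) - x" using mod_eq_dvd_iff_nat[of x "x+d" M] by simp
    then have "d mod M = 0" by simp
    with assms show False by simp
  qed
  have sub: "?S1 \<union> ?S2 \<subseteq> {x. x < l \<and> ftf M (x + d) \<noteq> ftf M x}"
    using disj by (auto simp: ftf_def)
  have "card (?S1 \<union> ?S2) = card ?S1 + card ?S2"
    using disj by (intro card_Un_disjoint) auto
  moreover have "card (?S1 \<union> ?S2) \<le> card {x. x < l \<and> ftf M (x + d) \<noteq> ftf M x}"
    using sub by (intro card_mono) auto
  ultimately show ?thesis using c1 c2 by linarith
qed

lemma arith_mis: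
  fixes K B D l l2 m1 m2 :: nat
  assumes M: "M = 3*K+1" and K2: "K \<ge> 2" and num1: "B + D + 1 \<le> 3*K" and num2: "D + 2 \<le> 2*K"
    and sum: "l + l2 = K * M" and h1: "2 * (l div M) \<le> m1" and h2: "l2 \<le> m2 + B + l2 div M + 1"
  shows "D \<le> m1 + m2"
proof -
  define z where "z = l div M"
  define z2 where "z2 = l2 div M"
  have Mpos: "M > 0" using M by simp
  have "(l + l2) div M = z + z2 + ((l mod M + l2 mod M) div M)"
    unfolding z_def z2_def by (rule div_add1_eq)
  moreover have "(l mod M + l2 mod M) div M \<le> 1"
  proof -
    have "l mod M < M" "l2 mod M < M" using Mpos by simp_all
    then have "l mod M + l2 mod M < 2 * M" by linarith
    then have "(l mod M + l2 mod M) div M < 2" by (rule less_mult_imp_div_less)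
    then show ?thesis by simp
  qed
  moreover have "(l + l2) div M = K" using sum Mpos by simp
  ultimately have zz: "K \<le> z + z2 + 1" by linarith
  show ?thesis
  proof (cases "z2 = 0")
    case True
    then show ?thesis using zz h1 num2 unfolding z_def by linarith
  next
    case False
    define W where "W = K * z2"
    have W1: "W \<ge> K" using False unfolding W_def by simp
    have W2: "W \<ge> 2 * z2" using K2 unfolding W_def by simp
    have "z2 * M \<le> l2" unfolding z2_def by (rule div_times_less_eq_dividend)
    moreover have "z2 * M = 3 * W + z2" unfolding W_def M by (simp add: algebra_simps)
    ultimately have "3 * W + z2 \<le> l2" by simp
    then show ?thesis using h1 h2 zz W1 W2 False num1 unfolding z_def z2_def by linarith
  qed
qed

lemma arith_al:
  fixes K B D l2 m2 :: nat
  assumes M: "M = 3*K+1" and num1: "B + D + 1 \<le> 3*K"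
    and l2: "M \<le> l2" and h2: "l2 \<le> m2 + B + l2 div M + 1"
  shows "D \<le> m2"
proof -
  define z2 where "z2 = l2 div M"
  have "1 \<le> z2" unfolding z2_def using l2 M div_le_mono[of M l2 M] by simp
  define W where "W = K * z2"
  have W1: "W \<ge> K" using \<open>1 \<le> z2\<close> unfolding W_def by simp
  have "z2 * M \<le> l2" unfolding z2_def by (rule div_times_less_eq_dividend)
  moreover have "z2 * M = 3 * W + z2" unfolding W_def M by (simp add: algebra_simps)
  ultimately have "3 * W + z2 \<le> l2" by simp
  then show ?thesis using h2 W1 num1 unfolding z2_def by linarith
qed

lemma core:
  fixes g :: "nat \<Rightarrow> bool" and K T B D p len M F L :: nat
  assumes M: "M = 3*K+1" and F: "F = K*M" and L: "L = F + T"
    and K2: "K \<ge> 2"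
    and num1: "B + D + 1 \<le> 3*K" and num2: "D + 2 \<le> 2*K" and num3: "B + D + 1 + T div M \<le> T"
    and front: "\<And>y. y < len \<Longrightarrow> y mod L < F \<Longrightarrow> g y = ftf M (y mod L)"
    and tail: "\<And>q. q*L + L \<le> len \<Longrightarrow> card {y. q*L + F \<le> y \<and> y < q*L + L \<and> g y} \<le> B"
    and pl: "p + L \<le> len" and pm: "p mod L \<noteq> 0"
  shows "D \<le> card {x. x < F \<and> g (p+x) \<noteq> ftf M x}"
proof -
  define \<rho> where "\<rho> = p mod L"
  define q where "q = p div L"
  have Mpos: "M > 0" using M by simp
  have pq: "p = q * L + \<rho>" unfolding q_def \<rho>_def by simp
  have \<rho>0: "0 < \<rho>" using pm unfolding \<rho>_def by simp
  have Lpos: "L > 0" using K2 unfolding L F M by simp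
  have \<rho>L: "\<rho> < L" unfolding \<rho>_def using Lpos by simp
  define Mis where "Mis = {x. x < F \<and> g (p+x) \<noteq> ftf M x}"
  define lo where "lo = F - \<rho>"
  define hi where "hi = min F (L - \<rho>)"
  have FL: "F \<le> L" using L by simp
  have finMis: "finite Mis" unfolding Mis_def by simp
  have P1: "g (p + x) = ftf M (x + \<rho>)" if "x < lo" for x
  proof -
    have e: "p + x = q * L + (\<rho> + x)" using pq by simp
    have "\<rho> + x < L" using that FL unfolding lo_def by simp
    have "(p + x) mod L = (q * L + (\<rho> + x)) mod L" by (simp only: e)
    also have "\<dots> = (\<rho> + x) mod L" by (rule mod_mult_self3)
    also have "\<dots> = \<rho> + x" using \<open>\<rho> + x < L\<close> by simp
    finally have "(p + x) mod L = \<rho> + x" .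
    moreover have "p + x < len" using that pl FL unfolding lo_def by simp
    moreover have "\<rho> + x < F" using that unfolding lo_def by simp
    ultimately show ?thesis using front[of "p+x"] by (simp add: add.commute)
  qed
  have P3: "g (p + (y + (L - \<rho>))) = ftf M y" if "y < F - (L - \<rho>)" for y
  proof -
    have e: "p + (y + (L - \<rho>)) = (q+1) * L + y" using pq \<rho>L by simp
    have "y < L" using that FL by simp
    have "(p + (y + (L - \<rho>))) mod L = ((q+1) * L + y) mod L" by (simp only: e)
    also have "\<dots> = y mod L" by (rule mod_mult_self3)
    also have "\<dots> = y" using \<open>y < L\<close> by simp
    finally have "(p + (y + (L - \<rho>))) mod L = y" .
    moreover have "p + (y + (L - \<rho>)) < len" using that pl FL \<rho>L by simp
    moreover have "y < F" using that by simp
    ultimately show ?thesis using front[of "p + (y + (L - \<rho>))"] by simp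
  qed
  have tailI: "card {x. lo \<le> x \<and> x < hi \<and> g (p + x)} \<le> B"
  proof -
    have "(\<lambda>x. p + x) ` {x. lo \<le> x \<and> x < hi \<and> g (p + x)} \<subseteq> {y. q*L + F \<le> y \<and> y < q*L + L \<and> g y}"
      using pq unfolding lo_def hi_def by auto
    moreover have "card ((\<lambda>x. p + x) ` {x. lo \<le> x \<and> x < hi \<and> g (p + x)}) = card {x. lo \<le> x \<and> x < hi \<and> g (p + x)}"
      by (rule card_image) simp
    moreover have "card {y. q*L + F \<le> y \<and> y < q*L + L \<and> g y} \<le> B"
      using tail[of q] pl pq by simp
    moreover have "card ((\<lambda>x. p + x) ` {x. lo \<le> x \<and> x < hi \<and> g (p + x)}) \<le> card {y. q*L + F \<le> y \<and> y < q*L + L \<and> g y}"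
      using calculation(1) by (intro card_mono) auto
    ultimately show ?thesis by linarith
  qed
  have mI: "hi - lo \<le> card (Mis \<inter> {lo..<hi}) + B + ((hi - lo) div M + 1)"
  proof -
    have "{lo..<hi} \<subseteq> (Mis \<inter> {lo..<hi}) \<union> {x. lo \<le> x \<and> x < hi \<and> g (p + x)}
           \<union> {x. lo \<le> x \<and> x < lo + (hi - lo) \<and> x mod M = M - 1}"
      unfolding Mis_def hi_def by (auto simp: ftf_def)
    then have "card {lo..<hi} \<le> card ((Mis \<inter> {lo..<hi}) \<union> {x. lo \<le> x \<and> x < hi \<and> g (p + x)}
           \<union> {x. lo \<le> x \<and> x < lo + (hi - lo) \<and> x mod M = M - 1})"
      by (intro card_mono) auto
    also have "\<dots> \<le> card (Mis \<inter> {lo..<hi}) + card {x. lo \<le> x \<and> x < hi \<and> g (p + x)}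
           + card {x. lo \<le> x \<and> x < lo + (hi - lo) \<and> x mod M = M - 1}"
      by (meson card_Un_le add_le_mono1 le_trans)
    finally show ?thesis using tailI res_upper[OF Mpos, of lo "hi - lo" "M - 1"] by simp
  qed
  have mP1: "2 * (lo div M) \<le> card (Mis \<inter> {..<lo})" if "\<rho> mod M \<noteq> 0"
  proof -
    have "{x. x < lo \<and> ftf M (x + \<rho>) \<noteq> ftf M x} \<subseteq> Mis \<inter> {..<lo}"
      unfolding Mis_def using P1 lo_def by auto
    then have "card {x. x < lo \<and> ftf M (x + \<rho>) \<noteq> ftf M x} \<le> card (Mis \<inter> {..<lo})"
      by (intro card_mono) auto
    then show ?thesis using shift_lower[OF Mpos that, of lo] by simp
  qed
  have mP3: "2 * ((F - (L - \<rho>)) div M) \<le> card (Mis \<inter> {L - \<rho>..<F})" if "(L - \<rho>) mod M \<noteq> 0"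
  proof -
    let ?A = "{y. y < F - (L - \<rho>) \<and> ftf M (y + (L - \<rho>)) \<noteq> ftf M y}"
    have "(\<lambda>y. y + (L - \<rho>)) ` ?A \<subseteq> Mis \<inter> {L - \<rho>..<F}"
      unfolding Mis_def using P3 by auto
    then have "card ((\<lambda>y. y + (L - \<rho>)) ` ?A) \<le> card (Mis \<inter> {L - \<rho>..<F})"
      by (intro card_mono) (auto simp: Mis_def)
    moreover have "card ((\<lambda>y. y + (L - \<rho>)) ` ?A) = card ?A" by (rule card_image) simp
    ultimately show ?thesis using shift_lower[OF Mpos that, of "F - (L - \<rho>)"] by simp
  qed
  have split: "card (Mis \<inter> {..<lo}) + card (Mis \<inter> {lo..<hi}) + card (Mis \<inter> {L - \<rho>..<F}) \<le> card Mis"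
  proof -
    have d1: "(Mis \<inter> {..<lo}) \<inter> (Mis \<inter> {lo..<hi}) = {}" by auto
    have d2: "((Mis \<inter> {..<lo}) \<union> (Mis \<inter> {lo..<hi})) \<inter> (Mis \<inter> {L - \<rho>..<F}) = {}"
      unfolding lo_def hi_def using FL by auto
    have "card ((Mis \<inter> {..<lo}) \<union> (Mis \<inter> {lo..<hi}) \<union> (Mis \<inter> {L - \<rho>..<F}))
       = card (Mis \<inter> {..<lo}) + card (Mis \<inter> {lo..<hi}) + card (Mis \<inter> {L - \<rho>..<F})"
      using d1 d2 finMis by (simp add: card_Un_disjoint)
    moreover have "card ((Mis \<inter> {..<lo}) \<union> (Mis \<inter> {lo..<hi}) \<union> (Mis \<inter> {L - \<rho>..<F})) \<le> card Mis"
      using finMis by (intro card_mono) auto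
    ultimately show ?thesis by simp
  qed
  have goal: "D \<le> card Mis"
  proof (cases "\<rho> < F")
    case rF: True
    show ?thesis
    proof (cases "L - \<rho> < F")
      case True
      have "hi - lo = T" unfolding hi_def lo_def using True rF L by simp
      then have "T \<le> card (Mis \<inter> {lo..<hi}) + B + (T div M + 1)" using mI by simp
      then show ?thesis using split num3 by linarith
    next
      case False
      have hl: "hi - lo = \<rho>" unfolding hi_def lo_def using False rF by simp
      show ?thesis
      proof (cases "\<rho> mod M = 0")
        case True
        have "M \<le> \<rho>" using True \<rho>0 by (metis dvd_imp_le mod_0_imp_dvd)
        then have "D \<le> card (Mis \<inter> {lo..<hi})" using arith_al[OF M num1, of \<rho>] mI hl by simp
        then show ?thesis using split by linarith
      next
        case False
        have "lo + \<rho> = K * M" unfolding lo_def using rF F by simp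
        then have "D \<le> card (Mis \<inter> {..<lo}) + card (Mis \<inter> {lo..<hi})"
          using arith_mis[OF M K2 num1 num2, of lo \<rho>] mP1[OF False] mI hl by simp
        then show ?thesis using split by linarith
      qed
    qed
  next
    case rF: False
    have lo0: "lo = 0" unfolding lo_def using rF by simp
    show ?thesis
    proof (cases "L - \<rho> < F \<and> (L - \<rho>) mod M = 0")
      case True
      have hl: "hi - lo = L - \<rho>" unfolding hi_def using lo0 True by simp
      have "0 < L - \<rho>" using \<rho>L by simp
      then have "M \<le> L - \<rho>" using True by (metis dvd_imp_le mod_0_imp_dvd)
      then have "D \<le> card (Mis \<inter> {lo..<hi})" using arith_al[OF M num1, of "L - \<rho>"] mI hl by simp
      then show ?thesis using split by linarith
    next
      case False
      have m3: "2 * ((F - (L - \<rho>)) div M) \<le> card (Mis \<inter> {L - \<rho>..<F})"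
      proof (cases "L - \<rho> < F")
        case True then show ?thesis using False mP3 by auto
      next
        case False then show ?thesis by simp
      qed
      have "(F - (L - \<rho>)) + (hi - lo) = K * M" unfolding hi_def lo0 using F by auto
      then have "D \<le> card (Mis \<inter> {L - \<rho>..<F}) + card (Mis \<inter> {lo..<hi})"
        using arith_mis[OF M K2 num1 num2, of "F - (L - \<rho>)" "hi - lo"] m3 mI by simp
      then show ?thesis using split by linarith
    qed
  qed
  then show ?thesis unfolding Mis_def .
qed



lemma length_concat_replicate: "length (concat (replicate m xs)) = m * length xs"
  by (induction m) auto

lemma nth_concat_replicate:
  "i < m * length xs \<Longrightarrow> concat (replicate m xs) ! i = xs ! (i mod length xs)"
proof (induction m arbitrary: i)
  case 0 then show ?case by simp
next
  case (Suc m)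
  show ?case
  proof (cases "i < length xs")
    case True then show ?thesis by (simp add: nth_append)
  next
    case False
    then have "concat (replicate (Suc m) xs) ! i = concat (replicate m xs) ! (i - length xs)"
      by (simp add: nth_append)
    also have "\<dots> = xs ! ((i - length xs) mod length xs)" using Suc False by (intro Suc.IH) auto
    also have "(i - length xs) mod length xs = i mod length xs" using False by (simp add: mod_if)
    finally show ?thesis .
  qed
qed

lemma concat_replicate_zeros: "concat (replicate m (zeros n)) = zeros (m * n)"
  by (induction m) (auto simp: zeros_def replicate_add)

lemma length_front_tag: "length (front_tag n k) = n * k * (3 * n * k + 1)"
  unfolding front_tag_def by (simp add: length_concat_replicate ones_def)

lemma nth_front_tag:
  assumes "x < n * k * (3 * n * k + 1)"
  shows "front_tag n k ! x = ftf (3 * n * k + 1) x"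
proof -
  have "front_tag n k ! x = (ones (3 * n * k) @ [False]) ! (x mod (3 * n * k + 1))"
    unfolding front_tag_def using assms by (subst nth_concat_replicate) (auto simp: ones_def)
  also have "\<dots> = (x mod (3 * n * k + 1) \<noteq> 3 * n * k)"
  proof -
    have gen: "r < 3 * n * k + 1 \<Longrightarrow> (ones (3 * n * k) @ [False]) ! r = (r \<noteq> 3 * n * k)" for r
      by (auto simp: ones_def nth_append)
    show ?thesis by (rule gen) simp
  qed
  finally show ?thesis by (simp add: ftf_def)
qed

lemma hamming_append:
  assumes "length a = length c" "length b = length d"
  shows "hamming (a @ b) (c @ d) = hamming a c + hamming b d"
proof -
  let ?A = "{p. p < length a \<and> a ! p \<noteq> c ! p}"
  let ?B = "{p. p < length b \<and> b ! p \<noteq> d ! p}"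
  have "{p. p < length (a @ b) \<and> (a @ b) ! p \<noteq> (c @ d) ! p} = ?A \<union> (\<lambda>p. p + length a) ` ?B"
  proof (rule set_eqI)
    fix p
    show "p \<in> {p. p < length (a @ b) \<and> (a @ b) ! p \<noteq> (c @ d) ! p} \<longleftrightarrow> p \<in> ?A \<union> (\<lambda>p. p + length a) ` ?B"
    proof (cases "p < length a")
      case True then show ?thesis using assms by (auto simp: nth_append)
    next
      case False
      have "p \<in> (\<lambda>p. p + length a) ` ?B \<longleftrightarrow> p - length a \<in> ?B"
      proof
        assume "p \<in> (\<lambda>p. p + length a) ` ?B"
        then obtain x where "x \<in> ?B" "p = x + length a" by blast
        then show "p - length a \<in> ?B" by simp
      next
        assume "p - length a \<in> ?B"
        moreover have "p = (p - length a) + length a" using False by simp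
        ultimately show "p \<in> (\<lambda>p. p + length a) ` ?B" by (rule rev_image_eqI)
      qed
      then show ?thesis using assms False by (auto simp: nth_append)
    qed
  qed
  moreover have "?A \<inter> (\<lambda>p. p + length a) ` ?B = {}" by auto
  moreover have "card ((\<lambda>p. p + length a) ` ?B) = card ?B" by (rule card_image) simp
  ultimately show ?thesis unfolding hamming_def by (simp add: card_Un_disjoint)
qed

lemma hamming_False: "length xs = m \<Longrightarrow> hamming (replicate m False) xs = length (filter id xs)"
  unfolding hamming_def by (auto simp: length_filter_conv_card intro!: arg_cong[where f=card])

lemma hamming_True: "length xs = m \<Longrightarrow> hamming (replicate m True) xs = m - length (filter id xs)"
proof -
  assume l: "length xs = m"
  have "hamming (replicate m True) xs = length (filter Not xs)"
    unfolding hamming_def using l by (auto simp: length_filter_conv_card intro!: arg_cong[where f=card])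
  moreover have "length (filter id xs) + length (filter (\<lambda>x. \<not> id x) xs) = length xs"
    by (rule sum_length_filter_compl)
  ultimately show ?thesis using l by simp
qed

lemma hamming_refl: "hamming xs xs = 0"
  unfolding hamming_def by simp

lemma hamming_sym: "length x = length y \<Longrightarrow> hamming x y = hamming y x"
  unfolding hamming_def by metis

lemma hamming_tri:
  assumes "length a = length b" "length b = length c"
  shows "hamming a c + 2 * card {p. p < length a \<and> a ! p = c ! p \<and> b ! p \<noteq> a ! p}
         \<le> hamming a b + hamming b c"
proof -
  let ?A = "{p. p < length a \<and> a ! p \<noteq> b ! p}"
  let ?B = "{p. p < length b \<and> b ! p \<noteq> c ! p}"
  let ?C = "{p. p < length a \<and> a ! p \<noteq> c ! p}"
  let ?X = "{p. p < length a \<and> a ! p = c ! p \<and> b ! p \<noteq> a ! p}"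
  have f: "finite ?A" "finite ?B" "finite ?C" "finite ?X" by auto
  have "card (?A \<union> ?B) + card (?A \<inter> ?B) = card ?A + card ?B" using card_Un_Int[OF f(1) f(2)] by simp
  moreover have "card (?C \<union> ?X) \<le> card (?A \<union> ?B)"
    using f assms by (intro card_mono) auto
  moreover have "card (?C \<union> ?X) = card ?C + card ?X" using f by (intro card_Un_disjoint) auto
  moreover have "card ?X \<le> card (?A \<inter> ?B)" using f assms by (intro card_mono) auto
  ultimately show ?thesis unfolding hamming_def by linarith
qed



lemma length_number: "1 \<le> r \<Longrightarrow> r \<le> n \<Longrightarrow> length (number n r) = n"
  unfolding number_def zeros_def by simp

lemma cnt_number: "length (filter id (number n r)) = 1"
  unfolding number_def zeros_def by simp

lemma cnt_zeros_concat: "length (filter id (concat (replicate m (zeros n)))) = 0"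
  unfolding concat_replicate_zeros by (simp add: zeros_def)

lemma length_zeros_concat: "length (concat (replicate m (zeros n))) = m * n"
  unfolding concat_replicate_zeros by (simp add: zeros_def)

lemma length_encode:
  assumes "1 \<le> i" "i < j" "j \<le> k" "1 \<le> r" "r \<le> n" "1 \<le> s" "s \<le> n"
  shows "length (encode n k i j (r, s)) = n * k"
proof -
  have "length (encode n k i j (r, s)) = (i - 1) * n + n + (j - i - 1) * n + n + (k - j) * n"
    unfolding encode_def using assms by (simp add: length_zeros_concat length_number)
  also have "\<dots> = ((i - 1) + 1 + (j - i - 1) + 1 + (k - j)) * n" by (simp add: algebra_simps)
  also have "(i - 1) + 1 + (j - i - 1) + 1 + (k - j) = k" using assms by simp
  finally show ?thesis by simp
qed

lemma cnt_encode: "length (filter id (encode n k i j e)) = 2"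
  unfolding encode_def by (cases e) (simp add: cnt_zeros_concat cnt_number)

lemma length_back_tag:
  assumes "1 \<le> i'" "i' \<le> Nval k"
  shows "length (back_tag n k i') = Nval k * bval n k"
proof -
  have "length (back_tag n k i') = (i' - 1) * bval n k + bval n k + (Nval k - i') * bval n k"
    unfolding back_tag_def by (simp add: zeros_def ones_def)
  also have "\<dots> = ((i' - 1) + 1 + (Nval k - i')) * bval n k" by (simp add: algebra_simps)
  also have "(i' - 1) + 1 + (Nval k - i') = Nval k" using assms by simp
  finally show ?thesis .
qed

lemma cnt_back_tag: "length (filter id (back_tag n k i')) = bval n k"
  unfolding back_tag_def by (simp add: zeros_def ones_def)

lemma card_pairs: "card {(a, b). 1 \<le> a \<and> a < b \<and> b \<le> (k::nat)} = k choose 2"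
proof -
  let ?P = "{(a, b). 1 \<le> a \<and> a < b \<and> b \<le> (k::nat)}"
  let ?f = "\<lambda>(a::nat, b::nat). {a, b}"
  have inj: "inj_on ?f ?P"
  proof (rule inj_onI)
    fix x y assume "x \<in> ?P" "y \<in> ?P" "?f x = ?f y"
    then show "x = y" by (cases x, cases y) (auto simp: doubleton_eq_iff)
  qed
  have img: "?f ` ?P = {B. B \<subseteq> {1..k} \<and> card B = 2}"
  proof
    show "?f ` ?P \<subseteq> {B. B \<subseteq> {1..k} \<and> card B = 2}" by auto
  next
    show "{B. B \<subseteq> {1..k} \<and> card B = 2} \<subseteq> ?f ` ?P"
    proof
      fix B assume "B \<in> {B. B \<subseteq> {1..k} \<and> card B = 2}"
      then have B: "B \<subseteq> {1..k}" "card B = 2" by auto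
      then obtain x y where xy: "B = {x, y}" "x \<noteq> y" by (auto simp: card_2_iff)
      show "B \<in> ?f ` ?P"
      proof (cases "x < y")
        case True
        then have "(x, y) \<in> ?P" using B xy by auto
        then show ?thesis using xy by (auto intro: rev_image_eqI)
      next
        case False
        then have "(y, x) \<in> ?P" using B xy by auto
        moreover have "B = ?f (y, x)" using xy by auto
        ultimately show ?thesis by (rule rev_image_eqI)
      qed
    qed
  qed
  have "card ?P = card (?f ` ?P)" using inj by (simp add: card_image)
  also have "\<dots> = card {1..k} choose 2" unfolding img by (rule n_subsets) simp
  finally show ?thesis by simp
qed

lemma pair_index_bounds:
  assumes "1 \<le> i" "i < j" "j \<le> k"
  shows "1 \<le> pair_index k i j" "pair_index k i j \<le> Nval k"
proof -
  let ?S = "{(a, b). 1 \<le> a \<and> a < b \<and> b \<le> k \<and> (a < i \<or> (a = i \<and> b \<le> j))}"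
  let ?P = "{(a, b). 1 \<le> a \<and> a < b \<and> b \<le> (k::nat)}"
  have finP: "finite ?P"
    by (rule finite_subset[of _ "{1..k} \<times> {1..k}"]) auto
  have sub: "?S \<subseteq> ?P" by auto
  then have finS: "finite ?S" using finP by (rule finite_subset)
  have "(i, j) \<in> ?S" using assms by auto
  then have "?S \<noteq> {}" by auto
  then show "1 \<le> pair_index k i j" unfolding pair_index_def using finS
    by (simp add: Suc_le_eq card_gt_0_iff)
  have "card ?S \<le> card ?P" using sub finP by (rule card_mono[rotated])
  then show "pair_index k i j \<le> Nval k" unfolding pair_index_def Nval_def card_pairs .
qed



lemma nth_concat_eqlen:
  assumes "\<forall>xs \<in> set xss. length xs = L" "q < length xss" "r < L"
  shows "concat xss ! (q * L + r) = xss ! q ! r"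
  using assms
proof (induction xss arbitrary: q)
  case Nil then show ?case by simp
next
  case (Cons x xss)
  show ?case
  proof (cases q)
    case 0 then show ?thesis using Cons by (simp add: nth_append)
  next
    case (Suc q')
    have "concat (x # xss) ! (q * L + r) = concat xss ! (q' * L + r)"
      using Cons Suc by (simp add: nth_append)
    also have "\<dots> = xss ! q' ! r" using Cons Suc by (intro Cons.IH) auto
    finally show ?thesis using Suc by simp
  qed
qed

lemma length_concat_eqlen: "\<forall>xs \<in> set xss. length xs = L \<Longrightarrow> length (concat xss) = length xss * L"
  by (induction xss) auto

context
  fixes n k i j r s :: nat
  assumes ij: "1 \<le> i" "i < j" "j \<le> k" and rs: "1 \<le> r" "r < s" "s \<le> n"
begin

lemma block_parts:
  "length (encode n k i j (r, s)) = n * k"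
  "length (back_tag n k (pair_index k i j)) = Nval k * bval n k"
  using length_encode[of i j k r n s] length_back_tag[of "pair_index k i j" k n]
    pair_index_bounds[OF ij] ij rs by auto

lemma length_block: "length (block n k i j (r, s)) = Lval n k"
  unfolding block_def Lval_def using block_parts length_front_tag[of n k] by (simp add: algebra_simps)

lemma nth_block_front:
  "x < n * k * (3 * n * k + 1) \<Longrightarrow> block n k i j (r, s) ! x = ftf (3 * n * k + 1) x"
  unfolding block_def using length_front_tag[of n k] nth_front_tag[of x n k] by (simp add: nth_append)

lemma card_block_tail:
  "card {x. n * k * (3 * n * k + 1) \<le> x \<and> x < Lval n k \<and> block n k i j (r, s) ! x} = 2 + bval n k"
proof -
  let ?F = "n * k * (3 * n * k + 1)"
  let ?R = "encode n k i j (r, s) @ back_tag n k (pair_index k i j)"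
  have lR: "length ?R = n * k + Nval k * bval n k" using block_parts by simp
  have LF: "Lval n k = ?F + length ?R" unfolding Lval_def lR by (simp add: algebra_simps)
  have "{x. ?F \<le> x \<and> x < Lval n k \<and> block n k i j (r, s) ! x} = (\<lambda>y. y + ?F) ` {y. y < length ?R \<and> ?R ! y}"
  proof (rule set_eqI)
    fix x
    show "x \<in> {x. ?F \<le> x \<and> x < Lval n k \<and> block n k i j (r, s) ! x} \<longleftrightarrow> x \<in> (\<lambda>y. y + ?F) ` {y. y < length ?R \<and> ?R ! y}"
    proof
      assume "x \<in> {x. ?F \<le> x \<and> x < Lval n k \<and> block n k i j (r, s) ! x}"
      then have x: "?F \<le> x" "x < Lval n k" "block n k i j (r, s) ! x" by auto
      then have "?R ! (x - ?F)" unfolding block_def using length_front_tag[of n k] by (simp add: nth_append)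
      moreover have "x - ?F < length ?R" using x LF by simp
      moreover have "x = (x - ?F) + ?F" using x by simp
      ultimately show "x \<in> (\<lambda>y. y + ?F) ` {y. y < length ?R \<and> ?R ! y}" by (intro rev_image_eqI[of "x - ?F"]) auto
    next
      assume "x \<in> (\<lambda>y. y + ?F) ` {y. y < length ?R \<and> ?R ! y}"
      then obtain y where y: "y < length ?R" "?R ! y" "x = y + ?F" by blast
      then show "x \<in> {x. ?F \<le> x \<and> x < Lval n k \<and> block n k i j (r, s) ! x}"
        unfolding block_def using length_front_tag[of n k] LF by (simp add: nth_append)
    qed
  qed
  moreover have "card ((\<lambda>y. y + ?F) ` {y. y < length ?R \<and> ?R ! y}) = card {y. y < length ?R \<and> ?R ! y}"
    by (rule card_image) simp
  moreover have "card {y. y < length ?R \<and> ?R ! y} = length (filter id ?R)"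
  proof -
    have "length (filter id ?R) = card {y. y < length ?R \<and> id (?R ! y)}" by (rule length_filter_conv_card)
    then show ?thesis by (simp only: id_apply)
  qed
  moreover have "length (filter id ?R) = 2 + bval n k" using cnt_encode cnt_back_tag by simp
  ultimately show ?thesis by simp
qed

lemma hamming_template_block:
  assumes "n \<ge> 2"
  shows "hamming (template n k) (block n k i j (r, s)) = 2 * dval n k"
proof -
  have "hamming (template n k) (block n k i j (r, s)) =
      hamming (front_tag n k) (front_tag n k) + (hamming (ones (n * k)) (encode n k i j (r, s))
      + hamming (zeros (Nval k * bval n k)) (back_tag n k (pair_index k i j)))"
    unfolding template_def block_def using block_parts
    by (simp add: hamming_append ones_def zeros_def)
  also have "\<dots> = (n * k - 2) + bval n k"
    using block_parts cnt_encode cnt_back_tag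
    by (simp add: hamming_refl ones_def zeros_def hamming_True hamming_False)
  also have "\<dots> = 2 * dval n k"
  proof -
    have "2 * k \<le> n * k" using assms by simp
    moreover have "k \<ge> 1" using ij by simp
    moreover have g: "\<And>X. 2*k \<le> X \<Longrightarrow> 1 \<le> k \<Longrightarrow> X - 2 + (X + 2 - 2*k) = 2*(X - k)" by arith
    ultimately show ?thesis unfolding bval_def dval_def using g[of "n*k"] by simp
  qed
  finally show ?thesis .
qed

end

lemma length_template: "length (template n k) = Lval n k"
  unfolding template_def Lval_def by (simp add: length_front_tag ones_def zeros_def algebra_simps)

lemma nth_template_front:
  "x < n * k * (3 * n * k + 1) \<Longrightarrow> template n k ! x = ftf (3 * n * k + 1) x"
  unfolding template_def using length_front_tag[of n k] nth_front_tag[of x n k] by (simp add: nth_append)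



lemma numkey:
  fixes n k :: nat
  assumes n2: "n \<ge> 2" and k3: "k \<ge> 3"
  shows "(2 + bval n k) + (2 * dval n k + 1) + 1 \<le> 3 * (n * k)"
    "(2 * dval n k + 1) + 2 \<le> 2 * (n * k)"
    "(2 + bval n k) + (2 * dval n k + 1) + 1 + (n * k + Nval k * bval n k) div (3 * n * k + 1)
       \<le> n * k + Nval k * bval n k"
proof -
  define K where "K = n * k"
  define b where "b = bval n k"
  define N where "N = Nval k"
  have K2k: "2 * k \<le> K" unfolding K_def using n2 by simp
  have bK: "b = K + 2 - 2 * k" unfolding b_def bval_def K_def by simp
  have dK: "dval n k = K - k" unfolding dval_def K_def by simp
  have b2: "b \<ge> 2" using bK K2k by simp
  have N3: "N \<ge> 3"
  proof -
    have "k * (k - 1) \<ge> 3 * 2" using k3 by (intro mult_mono) auto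
    then show ?thesis unfolding N_def Nval_def choose_two by simp
  qed
  show "(2 + bval n k) + (2 * dval n k + 1) + 1 \<le> 3 * (n * k)"
    using bK dK K2k k3 unfolding b_def[symmetric] K_def[symmetric] by linarith
  show "(2 * dval n k + 1) + 2 \<le> 2 * (n * k)"
    using dK K2k k3 unfolding K_def[symmetric] by linarith
  define Y where "Y = (N - 2) * b"
  have Y2: "Y \<ge> 2" unfolding Y_def using N3 b2
    using mult_le_mono[of 1 "N-2" 2 b] by simp
  have NbY: "N * b = Y + 2 * b" unfolding Y_def using N3 by (simp add: algebra_simps diff_mult_distrib)
  define X where "X = Y - 1"
  have X1: "X \<ge> 1" unfolding X_def using Y2 by simp
  have KX: "K * X \<ge> K" using X1 by simp
  have "K + N * b < X * (3 * K + 1)"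
  proof -
    have "X * (3 * K + 1) = 3 * (K * X) + X" by (simp add: algebra_simps)
    moreover have "K + N * b = K + X + 1 + 2 * b" using NbY Y2 unfolding X_def by simp
    ultimately show ?thesis using KX bK K2k k3 by linarith
  qed
  then have "(K + N * b) div (3 * K + 1) < X" by (simp add: div_less_iff_less_mult)
  then have "(K + N * b) div (3 * K + 1) + 2 \<le> Y" unfolding X_def by simp
  then show "(2 + bval n k) + (2 * dval n k + 1) + 1 + (n * k + Nval k * bval n k) div (3 * n * k + 1)
       \<le> n * k + Nval k * bval n k"
    unfolding b_def[symmetric] N_def[symmetric] K_def[symmetric] dK
    using NbY bK K2k k3 by (simp add: K_def mult.assoc)
qed



lemma prefix_by_nth:
  assumes "length xs \<le> length ys" "\<And>i. i < length xs \<Longrightarrow> ys ! i = xs ! i"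
  shows "prefix xs ys"
proof -
  have "take (length xs) ys = xs" using assms by (intro nth_equalityI) auto
  then show ?thesis by (metis take_is_prefix)
qed

lemma Lval_split: "Lval n k = n * k * (3 * n * k + 1) + (n * k + Nval k * bval n k)"
  unfolding Lval_def by (simp add: algebra_simps)

lemma substrs_elim:
  assumes "w \<in> substrs l c"
  obtains p where "w = take l (drop p c)" "p + l \<le> length c"
  using assms unfolding substrs_def by auto

lemma aligned:
  fixes n k :: nat and E :: "(nat \<times> nat) list" and s w :: "bool list" and i j :: nat
  assumes n2: "n \<ge> 2" and k3: "k \<ge> 3"
    and Ev: "\<forall>(r, q) \<in> set E. 1 \<le> r \<and> r < q \<and> q \<le> n"
    and ls: "length s = Lval n k"
    and ts: "hamming (template n k) s \<le> dval n k"
    and ij: "1 \<le> i" "i < j" "j \<le> k"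
    and w: "w \<in> substrs (Lval n k) (choice n k E i j)" and ws: "hamming w s \<le> dval n k"
  shows "\<exists>q < length E. w = block n k i j (E ! q)"
proof -
  define M where "M = 3 * n * k + 1"
  define F where "F = n * k * (3 * n * k + 1)"
  define L where "L = Lval n k"
  define T where "T = n * k + Nval k * bval n k"
  define c where "c = choice n k E i j"
  have LFT: "L = F + T" unfolding L_def F_def T_def Lval_def by (simp add: algebra_simps)
  have FKM: "F = (n * k) * M" unfolding F_def M_def by simp
  have Lpos: "L > 0" unfolding LFT F_def using n2 k3 by simp
  have blen: "\<forall>xs \<in> set (map (block n k i j) E). length xs = L"
  proof
    fix xs assume "xs \<in> set (map (block n k i j) E)"
    then obtain e where eE: "e \<in> set E" and xe: "xs = block n k i j e" by auto
    obtain r q where e1: "e = (r, q)" by (cases e)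
    have "1 \<le> r" "r < q" "q \<le> n" using bspec[OF Ev eE] e1 by simp_all
    then show "length xs = L" using xe e1 length_block[OF ij] unfolding L_def by simp
  qed
  have lc: "length c = length E * L" unfolding c_def choice_def using length_concat_eqlen[OF blen] by simp
  have cnth: "c ! (q * L + x) = block n k i j (E ! q) ! x" if "q < length E" "x < L" for q x
    unfolding c_def choice_def using nth_concat_eqlen[OF blen, of q x] that by simp
  have Eq: "\<exists>r s. E ! q = (r, s) \<and> 1 \<le> r \<and> r < s \<and> s \<le> n" if qE: "q < length E" for q
  proof -
    obtain r r' where e1: "E ! q = (r, r')" by (cases "E ! q")
    show ?thesis using bspec[OF Ev nth_mem[OF qE]] e1 by simp
  qed
  have bfront: "block n k i j (E ! q) ! x = ftf M x" if "q < length E" "x < F" for q x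
    using Eq[OF that(1)] nth_block_front[OF ij] that(2) unfolding M_def F_def by auto
  have btail: "card {x. F \<le> x \<and> x < L \<and> block n k i j (E ! q) ! x} = 2 + bval n k" if "q < length E" for q
    using Eq[OF that(1)] card_block_tail[OF ij] unfolding F_def L_def by auto
  obtain p where wp: "w = take L (drop p c)" and pL: "p + L \<le> length c"
    using w unfolding L_def c_def by (rule substrs_elim)
  have lw: "length w = L" using wp pL by simp
  have wnth: "w ! x = c ! (p + x)" if "x < L" for x using wp pL that by simp
  have front: "c ! y = ftf M (y mod L)" if "y < length c" "y mod L < F" for y
  proof -
    have "y div L < length E" using that(1) lc Lpos by (simp add: div_less_iff_less_mult)
    moreover have "y = (y div L) * L + y mod L" by simp
    moreover have "y mod L < L" using Lpos by simp
    ultimately have "c ! y = block n k i j (E ! (y div L)) ! (y mod L)"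
      using cnth[of "y div L" "y mod L"] by simp
    then show ?thesis using bfront[of "y div L" "y mod L"] that \<open>y div L < length E\<close> by simp
  qed
  have tail: "card {y. q*L + F \<le> y \<and> y < q*L + L \<and> c ! y} \<le> 2 + bval n k" if "q*L + L \<le> length c" for q
  proof -
    have qE: "q < length E"
    proof -
      have "(q + 1) * L \<le> length E * L" using that lc by (simp add: algebra_simps)
      then show ?thesis using Lpos mult_le_cancel2[of "q+1" L "length E"] by simp
    qed
    have "{y. q*L + F \<le> y \<and> y < q*L + L \<and> c ! y} \<subseteq> (\<lambda>x. q * L + x) ` {x. F \<le> x \<and> x < L \<and> block n k i j (E ! q) ! x}"
    proof
      fix y assume "y \<in> {y. q*L + F \<le> y \<and> y < q*L + L \<and> c ! y}"
      then have y: "q*L + F \<le> y" "y < q*L + L" "c ! y" by auto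
      have ye: "y = q * L + (y - q * L)" using y by simp
      have ym: "y - q * L \<in> {x. F \<le> x \<and> x < L \<and> block n k i j (E ! q) ! x}"
      proof -
        have yy: "F \<le> y - q * L" "y - q * L < L" using y by arith+
        have "c ! (q * L + (y - q * L)) = block n k i j (E ! q) ! (y - q * L)" using cnth[OF qE yy(2)] .
        then have "block n k i j (E ! q) ! (y - q * L)" using y by simp
        then show ?thesis using yy by simp
      qed
      show "y \<in> (\<lambda>x. q * L + x) ` {x. F \<le> x \<and> x < L \<and> block n k i j (E ! q) ! x}"
        by (rule rev_image_eqI[where f="\<lambda>x. q * L + x", OF ym ye])
    qed
    then have "card {y. q*L + F \<le> y \<and> y < q*L + L \<and> c ! y} \<le> card ((\<lambda>x. q * L + x) ` {x. F \<le> x \<and> x < L \<and> block n k i j (E ! q) ! x})"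
      by (intro card_mono) auto
    also have "\<dots> \<le> card {x. F \<le> x \<and> x < L \<and> block n k i j (E ! q) ! x}" by (rule card_image_le) simp
    finally show ?thesis using btail[OF qE] by simp
  qed
  have p0: "p mod L = 0"
  proof (rule ccontr)
    assume pm: "p mod L \<noteq> 0"
    note nk = numkey[OF n2 k3]
    have "2 * dval n k + 1 \<le> card {x. x < F \<and> c ! (p + x) \<noteq> ftf M x}"
    proof (rule core[of M "n * k" F L T "2 + bval n k" "2 * dval n k + 1" "length c" "(!) c" p])
      show "M = 3 * (n * k) + 1" unfolding M_def by simp
      show "F = n * k * M" by (rule FKM)
      show "L = F + T" by (rule LFT)
      show "2 \<le> n * k" using n2 k3 mult_le_mono[of 2 n 1 k] by simp
      show "2 + bval n k + (2 * dval n k + 1) + 1 \<le> 3 * (n * k)" by (rule nk(1))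
      show "2 * dval n k + 1 + 2 \<le> 2 * (n * k)" by (rule nk(2))
      show "2 + bval n k + (2 * dval n k + 1) + 1 + T div M \<le> T"
        using nk(3) unfolding T_def M_def .
      show "c ! y = ftf M (y mod L)" if "y < length c" "y mod L < F" for y using front that .
      show "card {y. q * L + F \<le> y \<and> y < q * L + L \<and> c ! y} \<le> 2 + bval n k"
        if "q * L + L \<le> length c" for q using tail that .
      show "p + L \<le> length c" by (rule pL)
      show "p mod L \<noteq> 0" by (rule pm)
    qed
    also have "\<dots> \<le> hamming w (template n k)"
      unfolding hamming_def
    proof (rule card_mono)
      show "finite {p. p < length w \<and> w ! p \<noteq> template n k ! p}" by simp
      show "{x. x < F \<and> c ! (p + x) \<noteq> ftf M x} \<subseteq> {p. p < length w \<and> w ! p \<noteq> template n k ! p}"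
        using lw LFT wnth nth_template_front unfolding F_def M_def by auto
    qed
    also have "\<dots> \<le> hamming w s + hamming s (template n k)"
      using hamming_tri[of w s "template n k"] lw ls length_template unfolding L_def by simp
    also have "\<dots> \<le> 2 * dval n k"
      using ws ts hamming_sym[of s "template n k"] ls length_template by simp
    finally show False by simp
  qed
  define q where "q = p div L"
  have pq: "p = q * L" unfolding q_def using p0 div_mult_mod_eq[of p L] by simp
  have qE: "q < length E"
  proof -
    have "(q + 1) * L \<le> length E * L" using pL lc pq by (simp add: algebra_simps)
    then show ?thesis using Lpos mult_le_cancel2[of "q+1" L "length E"] by simp
  qed
  have "w = block n k i j (E ! q)"
  proof (rule nth_equalityI)
    show "length w = length (block n k i j (E ! q))"
      using lw blen qE unfolding L_def by (simp add: nth_mem)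
    show "w ! x = block n k i j (E ! q) ! x" if "x < length w" for x
      using wnth[of x] cnth[OF qE, of x] that lw pq by (simp add: add.commute)
  qed
  then show ?thesis using qE by blast
qed

theorem lemma3:
  fixes n k :: nat and E :: "(nat \<times> nat) list" and s :: "bool list"
  assumes "k \<ge> 3"
    and "distinct E"
    and "\<forall>(r, q) \<in> set E. 1 \<le> r \<and> r < q \<and> q \<le> n"
    and "length s = Lval n k"
    and "\<exists>w \<in> substrs (Lval n k) (template n k). hamming w s \<le> dval n k"
    and "\<forall>i j. 1 \<le> i \<and> i < j \<and> j \<le> k \<longrightarrow>
           (\<exists>w \<in> substrs (Lval n k) (choice n k E i j). hamming w s \<le> dval n k)"
  shows "prefix (front_tag n k) s \<and>
    (\<forall>w \<in> substrs (Lval n k) (template n k). hamming w s \<le> dval n k \<longrightarrow> prefix (front_tag n k) w) \<and>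
    (\<forall>i j. 1 \<le> i \<and> i < j \<and> j \<le> k \<longrightarrow>
       (\<forall>w \<in> substrs (Lval n k) (choice n k E i j). hamming w s \<le> dval n k \<longrightarrow> prefix (front_tag n k) w))"
proof (cases "n = 0")
  case True
  then show ?thesis by (simp add: front_tag_def)
next
  case False
  have k3: "k \<ge> 3" using assms(1) .
  have tsub: "w = template n k" if wsub: "w \<in> substrs (Lval n k) (template n k)" for w
  proof -
    obtain p where "w = take (Lval n k) (drop p (template n k))" "p + Lval n k \<le> length (template n k)"
      using wsub by (rule substrs_elim)
    then show ?thesis using length_template[of n k] by simp
  qed
  have ts: "hamming (template n k) s \<le> dval n k" using assms(5) tsub by blast
  have "\<exists>w \<in> substrs (Lval n k) (choice n k E 1 2). hamming w s \<le> dval n k"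
    using assms(6) k3 by simp
  then obtain w0 where w0: "w0 \<in> substrs (Lval n k) (choice n k E 1 2)" "hamming w0 s \<le> dval n k"
    by blast
  have "E \<noteq> []"
  proof
    assume "E = []"
    then have "choice n k E 1 2 = []" unfolding choice_def by simp
    moreover have "Lval n k > 0" unfolding Lval_def using False k3 by simp
    ultimately show False using w0(1) by (auto elim: substrs_elim)
  qed
  then obtain e where eE: "e \<in> set E" by (cases E) auto
  obtain a a' where ea: "e = (a, a')" by (cases e)
  have n2: "n \<ge> 2" using bspec[OF assms(3) eE] ea by simp
  have pre_block: "prefix (front_tag n k) (block n k i j e)" for i j e
    unfolding block_def by simp
  have part2: "\<forall>w \<in> substrs (Lval n k) (template n k). hamming w s \<le> dval n k \<longrightarrow> prefix (front_tag n k) w"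
  proof (intro ballI impI)
    fix w assume "w \<in> substrs (Lval n k) (template n k)"
    then have "w = template n k" by (rule tsub)
    then show "prefix (front_tag n k) w" unfolding template_def by simp
  qed
  have part3: "\<forall>i j. 1 \<le> i \<and> i < j \<and> j \<le> k \<longrightarrow>
       (\<forall>w \<in> substrs (Lval n k) (choice n k E i j). hamming w s \<le> dval n k \<longrightarrow> prefix (front_tag n k) w)"
  proof (intro allI impI ballI)
    fix i j w assume ij: "1 \<le> i \<and> i < j \<and> j \<le> k" and w: "w \<in> substrs (Lval n k) (choice n k E i j)"
      and ws: "hamming w s \<le> dval n k"
    obtain q where "q < length E" "w = block n k i j (E ! q)"
      using aligned[OF n2 k3 assms(3) assms(4) ts _ _ _ w ws] ij by blast
    then show "prefix (front_tag n k) w" using pre_block by simp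
  qed
  have part1: "prefix (front_tag n k) s"
  proof -
    obtain q where qE: "q < length E" and wq: "w0 = block n k 1 2 (E ! q)"
      using aligned[OF n2 k3 assms(3) assms(4) ts _ _ _ w0] k3 by auto
    obtain r r' where e1: "E ! q = (r, r')" by (cases "E ! q")
    have e: "E ! q = (r, r')" "1 \<le> r" "r < r'" "r' \<le> n"
      using bspec[OF assms(3) nth_mem[OF qE]] e1 by simp_all
    have ij: "1 \<le> (1::nat)" "(1::nat) < 2" "2 \<le> k" using k3 by auto
    let ?t = "template n k" and ?b = "block n k 1 2 (r, r')"
    let ?X = "{p. p < length ?t \<and> ?t ! p = ?b ! p \<and> s ! p \<noteq> ?t ! p}"
    have lb: "length ?b = Lval n k" using length_block[OF ij e(2-4)] .
    have l1: "length ?t = length s" using length_template[of n k] assms(4) by simp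
    have l2: "length s = length ?b" using lb assms(4) by simp
    have h1: "hamming ?t ?b + 2 * card ?X \<le> hamming ?t s + hamming s ?b"
      by (rule hamming_tri[OF l1 l2])
    have h2: "hamming ?t ?b = 2 * dval n k" using hamming_template_block[OF ij e(2-4) n2] .
    have "w0 = ?b" using wq e(1) by simp
    then have "hamming ?b s \<le> dval n k" using w0(2) by simp
    moreover have "hamming s ?b = hamming ?b s" by (rule hamming_sym[OF l2])
    ultimately have h3: "hamming s ?b \<le> dval n k" by simp
    have "card ?X = 0" using h1 h2 h3 ts by linarith
    moreover have "finite ?X" by simp
    ultimately have X0: "?X = {}" by (meson card_0_eq)
    show ?thesis
    proof (rule prefix_by_nth)
      show "length (front_tag n k) \<le> length s" using assms(4) length_front_tag[of n k] unfolding Lval_split by simp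
      fix x assume x: "x < length (front_tag n k)"
      then have xF: "x < n * k * (3 * n * k + 1)" using length_front_tag by simp
      have "?t ! x = ?b ! x" using nth_template_front[OF xF] nth_block_front[OF ij e(2-4) xF] by simp
      moreover have "x < length ?t"
      proof -
        have "length ?t = n*k*(3*n*k+1) + (n*k + Nval k * bval n k)"
          by (subst length_template) (rule Lval_split)
        then show ?thesis using xF by linarith
      qed
      ultimately have "s ! x = ?t ! x" using X0 by blast
      then show "s ! x = front_tag n k ! x" using nth_template_front[OF xF] nth_front_tag[OF xF] by simp
    qed
  qed
  show ?thesis using part1 part2 part3 by blast
qed

end
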